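(* Let $R$ be a QNA with Goodearl–Yakimov elements $y_1,\ldots,y_N$. For all $i,j\in[1,N]$ with $i\neq j$, we have $y_iR\cap y_jR=y_iy_jR$.
   Context: ${\mathbb K}$ is a field of characteristic $0$. A quantum nilpotent algebra (QNA) is an iterated Ore extension $R={\mathbb K}[x_1][x_2;\sigma_2,\delta_2]\cdots[x_N;\sigma_N,\delta_N]$, where $R_k={\mathbb K}[x_1][x_2;\sigma_2,\delta_2]\cdots[x_k;\sigma_k,\delta_k]$ ($R_0={\mathbb K}$), $\sigma_k$ is a ${\mathbb K}$-automorphism and $\delta_k$ a $\sigma_k$-derivation of $R_{k-1}$, together with a torus $\mathcal H$ acting rationally by ${\mathbb K}$-automorphisms on $R$ with each $x_i$ an $\mathcal H$-eigenvector, such that: (i) $\sigma_k(x_j)=\lambda_{kj}x_j$ for $j<k$, with $\lambda_{kj}\in{\mathbb K}^*$; (ii) $\delta_k$ is locally nilpotent on $R_{k-1}$; (iii) for each $k$ there exist $h_k\in\mathcal H$ and $q_k\in{\mathbb K}^*$ not a root of unity such that $h_k$ acts on $R_{k-1}$ as $\sigma_k$ and $h_k\cdot x_k=q_kx_k$. The rank is $n=|\{k:\delta_k=0\}|$ and $\mathcal H=({\mathbb K}^* )^n$ is taken maximal. Homogeneous elements are the $\mathcal H$-eigenvectors. An element $u$ is normal if $uR=Ru$; a prime element is a nonzero normal $p$ with $pR$ a completely prime ideal. Goodearl–Yakimov elements: there is a surjective map $\mu:[1,N]\to[1,n]$ with predecessor $p(k)=\max\{j<k:\mu(j)=\mu(k)\}$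 (or $-\infty$ if none) and successor $s(k)=\min\{j>k:\mu(j)=\mu(k)\}$ (or $+\infty$ if none), and homogeneous elements $y_1,\ldots,y_N\in R$, uniquely determined, with $y_k=x_k$ if $p(k)=-\infty$ and $y_k=y_{p(k)}x_k-c_k$ for some $c_k\in R_{k-1}$ otherwise, such that for every $k$ the set $\{y_j: j\le k,\ s(j)>k\}$ is, up to nonzero scalars, the set of homogeneous prime elements of $R_k$. The $y_i$ pairwise quasi-commute. *)

theory Defs
  imports Main
begin

definition K_algebra :: "('k::field \<Rightarrow> 'r::ring_1) \<Rightarrow> bool" where
  "K_algebra emb \<longleftrightarrow> emb 1 = 1 \<and> inj emb \<and>
     (\<forall>a b. emb (a + b) = emb a + emb b) \<and>
     (\<forall>a b. emb (a * b) = emb a * emb b) \<and>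
     (\<forall>c r. emb c * r = r * emb c)"

inductive_set gen_alg :: "('k \<Rightarrow> 'r::ring_1) \<Rightarrow> 'r set \<Rightarrow> 'r set"
  for emb :: "'k \<Rightarrow> 'r" and S :: "'r set" where
  base: "a \<in> S \<Longrightarrow> a \<in> gen_alg emb S"
| scal: "emb c \<in> gen_alg emb S"
| add:  "a \<in> gen_alg emb S \<Longrightarrow> b \<in> gen_alg emb S \<Longrightarrow> a + b \<in> gen_alg emb S"
| neg:  "a \<in> gen_alg emb S \<Longrightarrow> - a \<in> gen_alg emb S"
| mul:  "a \<in> gen_alg emb S \<Longrightarrow> b \<in> gen_alg emb S \<Longrightarrow> a * b \<in> gen_alg emb S"

definition Rk :: "('k \<Rightarrow> 'r::ring_1) \<Rightarrow> (nat \<Rightarrow> 'r) \<Rightarrow> nat \<Rightarrow> 'r set" where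
  "Rk emb x k = gen_alg emb (x ` {1..k})"

text \<open>R_k = R_{k-1}[x_k; sigma, delta]: sigma is a K-automorphism of R_{k-1},
  delta a K-linear sigma-derivation of R_{k-1}, x_k a = sigma(a) x_k + delta(a),
  and the powers of x_k are left-linearly independent over R_{k-1}
  (so R_k, which is generated by R_{k-1} and x_k, is the Ore extension).\<close>
definition ore_step ::
  "('k::field \<Rightarrow> 'r::ring_1) \<Rightarrow> (nat \<Rightarrow> 'r) \<Rightarrow> nat \<Rightarrow> ('r \<Rightarrow> 'r) \<Rightarrow> ('r \<Rightarrow> 'r) \<Rightarrow> bool" where
  "ore_step emb x k \<sigma> \<delta> \<longleftrightarrow>
     (let A = Rk emb x (k - 1) in
       \<sigma> ` A = A \<and> inj_on \<sigma> A \<and>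
       (\<forall>a\<in>A. \<forall>b\<in>A. \<sigma> (a + b) = \<sigma> a + \<sigma> b \<and> \<sigma> (a * b) = \<sigma> a * \<sigma> b) \<and>
       (\<forall>c. \<sigma> (emb c) = emb c) \<and>
       (\<forall>a\<in>A. \<delta> a \<in> A) \<and>
       (\<forall>a\<in>A. \<forall>b\<in>A. \<delta> (a + b) = \<delta> a + \<delta> b \<and> \<delta> (a * b) = \<sigma> a * \<delta> b + \<delta> a * b) \<and>
       (\<forall>c. \<delta> (emb c) = 0) \<and>
       (\<forall>a\<in>A. x k * a = \<sigma> a * x k + \<delta> a) \<and>
       (\<forall>(a :: nat \<Rightarrow> 'r) m. (\<forall>i\<le>m. a i \<in> A) \<and> (\<Sum>i\<le>m. a i * x k ^ i) = 0
            \<longrightarrow> (\<forall>i\<le>m. a i = 0)))"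

text \<open>The torus (K^*)^n, elements represented as functions nat => K, trivial beyond n.\<close>
definition torus :: "nat \<Rightarrow> (nat \<Rightarrow> 'k::field) set" where
  "torus n = {h. (\<forall>l<n. h l \<noteq> 0) \<and> (\<forall>l\<ge>n. h l = 1)}"

text \<open>A rational action of (K^*)^n by K-algebra automorphisms of R, with each generator
  x_i (1 <= i <= N) an eigenvector; since the x_i generate R, rationality amounts to
  the eigencharacters being rational characters h |-> prod_l h_l^(e_il).
  The action is faithful (H is identified with its image, "maximal" torus).\<close>
definition torus_action ::
  "('k::field \<Rightarrow> 'r::ring_1) \<Rightarrow> (nat \<Rightarrow> 'r) \<Rightarrow> nat \<Rightarrow> nat \<Rightarrow> ((nat \<Rightarrow> 'k) \<Rightarrow> 'r \<Rightarrow> 'r) \<Rightarrow> bool" where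
  "torus_action emb x N n act \<longleftrightarrow>
     (\<forall>h\<in>torus n. bij (act h) \<and> act h 1 = 1 \<and>
        (\<forall>a b. act h (a + b) = act h a + act h b \<and> act h (a * b) = act h a * act h b) \<and>
        (\<forall>c. act h (emb c) = emb c)) \<and>
     act (\<lambda>_. 1) = id \<and>
     (\<forall>h\<in>torus n. \<forall>h'\<in>torus n. act (\<lambda>l. h l * h' l) = act h \<circ> act h') \<and>
     (\<exists>e :: nat \<Rightarrow> nat \<Rightarrow> int. \<forall>i\<in>{1..N}. \<forall>h\<in>torus n.
          act h (x i) = emb (\<Prod>l<n. power_int (h l) (e i l)) * x i) \<and>
     (\<forall>h\<in>torus n. act h = id \<longrightarrow> h = (\<lambda>_. 1))"

definition homogeneous ::
  "('k::field \<Rightarrow> 'r::ring_1) \<Rightarrow> nat \<Rightarrow> ((nat \<Rightarrow> 'k) \<Rightarrow> 'r \<Rightarrow> 'r) \<Rightarrow> 'r \<Rightarrow> bool" where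
  "homogeneous emb n act u \<longleftrightarrow> u \<noteq> 0 \<and>
     (\<exists>\<chi> :: (nat \<Rightarrow> 'k) \<Rightarrow> 'k. \<forall>h\<in>torus n. act h u = emb (\<chi> h) * u)"

definition rank_of :: "nat \<Rightarrow> ('k \<Rightarrow> 'r::ring_1) \<Rightarrow> (nat \<Rightarrow> 'r) \<Rightarrow> (nat \<Rightarrow> 'r \<Rightarrow> 'r) \<Rightarrow> nat" where
  "rank_of N emb x \<delta> = card {k\<in>{1..N}. \<forall>a\<in>Rk emb x (k - 1). \<delta> k a = 0}"

definition QNA ::
  "('k::field \<Rightarrow> 'r::ring_1) \<Rightarrow> (nat \<Rightarrow> 'r) \<Rightarrow> nat \<Rightarrow> (nat \<Rightarrow> 'r \<Rightarrow> 'r) \<Rightarrow> (nat \<Rightarrow> 'r \<Rightarrow> 'r)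
     \<Rightarrow> nat \<Rightarrow> ((nat \<Rightarrow> 'k) \<Rightarrow> 'r \<Rightarrow> 'r) \<Rightarrow> bool" where
  "QNA emb x N \<sigma> \<delta> n act \<longleftrightarrow>
     K_algebra emb \<and>
     Rk emb x N = UNIV \<and>
     (\<forall>k\<in>{1..N}. ore_step emb x k (\<sigma> k) (\<delta> k)) \<and>
     (\<forall>k\<in>{1..N}. \<forall>j\<in>{1..<k}. \<exists>lam. lam \<noteq> 0 \<and> \<sigma> k (x j) = emb lam * x j) \<and>
     (\<forall>k\<in>{1..N}. \<forall>a\<in>Rk emb x (k - 1). \<exists>m. (\<delta> k ^^ m) a = 0) \<and>
     n = rank_of N emb x \<delta> \<and>
     torus_action emb x N n act \<and>
     (\<forall>k\<in>{1..N}. \<exists>h\<in>torus n. \<exists>q. (\<forall>m>0. q ^ m \<noteq> 1) \<and>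
         (\<forall>a\<in>Rk emb x (k - 1). act h a = \<sigma> k a) \<and> act h (x k) = emb q * x k)"

definition normal_in :: "'r::ring_1 set \<Rightarrow> 'r \<Rightarrow> bool" where
  "normal_in A u \<longleftrightarrow> u \<in> A \<and> {u * a |a. a \<in> A} = {a * u |a. a \<in> A}"

definition prime_elem_in :: "'r::ring_1 set \<Rightarrow> 'r \<Rightarrow> bool" where
  "prime_elem_in A p \<longleftrightarrow> p \<noteq> 0 \<and> normal_in A p \<and>
     (let P = {p * a |a. a \<in> A} in
        P \<noteq> A \<and> (\<forall>a\<in>A. \<forall>b\<in>A. a * b \<in> P \<longrightarrow> a \<in> P \<or> b \<in> P))"

text \<open>p(k) exists (i.e. p(k) <> -infinity)\<close>
definition has_pred :: "(nat \<Rightarrow> nat) \<Rightarrow> nat \<Rightarrow> bool" where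
  "has_pred \<mu> k \<longleftrightarrow> (\<exists>j. 1 \<le> j \<and> j < k \<and> \<mu> j = \<mu> k)"

definition pred_idx :: "(nat \<Rightarrow> nat) \<Rightarrow> nat \<Rightarrow> nat" where
  "pred_idx \<mu> k = (GREATEST j. 1 \<le> j \<and> j < k \<and> \<mu> j = \<mu> k)"

text \<open>s(j) > k\<close>
definition succ_gt :: "(nat \<Rightarrow> nat) \<Rightarrow> nat \<Rightarrow> nat \<Rightarrow> bool" where
  "succ_gt \<mu> j k \<longleftrightarrow> \<not> (\<exists>j'. j < j' \<and> j' \<le> k \<and> \<mu> j' = \<mu> j)"

definition GY_elements ::
  "('k::field \<Rightarrow> 'r::ring_1) \<Rightarrow> (nat \<Rightarrow> 'r) \<Rightarrow> nat \<Rightarrow> nat \<Rightarrow> ((nat \<Rightarrow> 'k) \<Rightarrow> 'r \<Rightarrow> 'r)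
     \<Rightarrow> (nat \<Rightarrow> nat) \<Rightarrow> (nat \<Rightarrow> 'r) \<Rightarrow> bool" where
  "GY_elements emb x N n act \<mu> y \<longleftrightarrow>
     \<mu> ` {1..N} = {1..n} \<and>
     (\<forall>k\<in>{1..N}. homogeneous emb n act (y k) \<and>
        (\<not> has_pred \<mu> k \<longrightarrow> y k = x k) \<and>
        (has_pred \<mu> k \<longrightarrow> (\<exists>c\<in>Rk emb x (k - 1). y k = y (pred_idx \<mu> k) * x k - c))) \<and>
     (\<forall>k\<in>{1..N}.
        (\<forall>j. 1 \<le> j \<and> j \<le> k \<and> succ_gt \<mu> j k \<longrightarrow>
            homogeneous emb n act (y j) \<and> prime_elem_in (Rk emb x k) (y j)) \<and>
        (\<forall>u. homogeneous emb n act u \<and> prime_elem_in (Rk emb x k) u \<longrightarrow>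
            (\<exists>j c. 1 \<le> j \<and> j \<le> k \<and> succ_gt \<mu> j k \<and> c \<noteq> 0 \<and> u = emb c * y j)))"

end

theory Submission
  imports Defs
begin


locale ostep =
  fixes A :: "'r::ring_1 set" and X :: 'r and \<sigma> \<delta> :: "'r \<Rightarrow> 'r"
  assumes zA: "0 \<in> A" and oA: "1 \<in> A"
    and addA: "a \<in> A \<Longrightarrow> b \<in> A \<Longrightarrow> a + b \<in> A"
    and negA: "a \<in> A \<Longrightarrow> - a \<in> A"
    and mulA: "a \<in> A \<Longrightarrow> b \<in> A \<Longrightarrow> a * b \<in> A"
    and sA: "a \<in> A \<Longrightarrow> \<sigma> a \<in> A"
    and sinj: "inj_on \<sigma> A"
    and sadd: "a \<in> A \<Longrightarrow> b \<in> A \<Longrightarrow> \<sigma> (a + b) = \<sigma> a + \<sigma> b"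
    and dA: "a \<in> A \<Longrightarrow> \<delta> a \<in> A"
    and comm: "a \<in> A \<Longrightarrow> X * a = \<sigma> a * X + \<delta> a"
    and indep: "\<And>c m. (\<forall>i\<le>m. c i \<in> A) \<Longrightarrow> (\<Sum>i\<le>m. c i * X ^ i) = 0 \<Longrightarrow> (\<forall>i\<le>m. c i = 0)"
begin

definition low :: "nat \<Rightarrow> 'r set" where
  "low m = {r. \<exists>a. (\<forall>d<m. a d \<in> A) \<and> r = (\<Sum>d<m. a d * X ^ d)}"

lemma subA: "a \<in> A \<Longrightarrow> b \<in> A \<Longrightarrow> a - b \<in> A"
  using addA negA by (metis diff_conv_add_uminus)

lemma low_zero: "0 \<in> low m"
  unfolding low_def by (rule CollectI, rule exI[of _ "\<lambda>_. 0"]) (simp add: zA)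

lemma low_0: "low 0 = {0}"
  unfolding low_def by auto

lemma low_add: "r \<in> low m \<Longrightarrow> s \<in> low m \<Longrightarrow> r + s \<in> low m"
  unfolding low_def
proof clarify
  fix a b assume a: "\<forall>d<m. a d \<in> A" and b: "\<forall>d<m. b d \<in> A"
  show "\<exists>c. (\<forall>d<m. c d \<in> A) \<and> (\<Sum>d<m. a d * X ^ d) + (\<Sum>d<m. b d * X ^ d) = (\<Sum>d<m. c d * X ^ d)"
    by (rule exI[of _ "\<lambda>d. a d + b d"]) (simp add: a b addA sum.distrib distrib_right)
qed

lemma low_neg: "r \<in> low m \<Longrightarrow> - r \<in> low m"
  unfolding low_def
proof clarify
  fix a assume a: "\<forall>d<m. a d \<in> A"
  show "\<exists>c. (\<forall>d<m. c d \<in> A) \<and> - (\<Sum>d<m. a d * X ^ d) = (\<Sum>d<m. c d * X ^ d)"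
    by (rule exI[of _ "\<lambda>d. - a d"]) (simp add: a negA sum_negf)
qed

lemma low_sum: "finite S \<Longrightarrow> (\<And>d. d \<in> S \<Longrightarrow> f d \<in> low m) \<Longrightarrow> sum f S \<in> low m"
  by (induction S rule: finite_induct) (auto simp: low_zero low_add)

lemma low_monom: "a \<in> A \<Longrightarrow> d < m \<Longrightarrow> a * X ^ d \<in> low m"
  unfolding low_def
proof (rule CollectI, rule exI[of _ "\<lambda>e. if e = d then a else 0"], intro conjI)
  assume "a \<in> A" "d < m"
  then show "\<forall>e<m. (if e = d then a else 0) \<in> A" by (simp add: zA)
  have "(\<Sum>e<m. (if e = d then a else 0) * X ^ e) = (\<Sum>e<m. if e = d then a * X ^ d else 0)"
    by (rule sum.cong) auto
  also have "\<dots> = a * X ^ d" using \<open>d < m\<close> by simp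
  finally show "a * X ^ d = (\<Sum>e<m. (if e = d then a else 0) * X ^ e)" by simp
qed

lemma low_elim: "r \<in> low m \<Longrightarrow> \<exists>a. (\<forall>d<m. a d \<in> A) \<and> r = (\<Sum>d<m. a d * X ^ d)"
  unfolding low_def by auto

lemma low_mono: "r \<in> low m \<Longrightarrow> m \<le> m' \<Longrightarrow> r \<in> low m'"
  by (auto dest!: low_elim intro!: low_sum low_monom)

lemma A_low: "a \<in> A \<Longrightarrow> a \<in> low (Suc m)"
  using low_monom[of a 0 "Suc m"] by simp

lemma low_lmul: "c \<in> A \<Longrightarrow> r \<in> low m \<Longrightarrow> c * r \<in> low m"
  by (auto dest!: low_elim simp: sum_distrib_left mult.assoc[symmetric] intro!: low_sum low_monom mulA)

lemma low_rmulX: "r \<in> low m \<Longrightarrow> r * X ^ e \<in> low (m + e)"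
proof -
  assume "r \<in> low m"
  then obtain a where a: "\<forall>d<m. a d \<in> A" and r: "r = (\<Sum>d<m. a d * X ^ d)" by (auto dest: low_elim)
  have "r * X ^ e = (\<Sum>d<m. a d * X ^ (d + e))"
    by (simp add: r sum_distrib_right mult.assoc power_add)
  moreover have "a d * X ^ (d + e) \<in> low (m + e)" if "d < m" for d
    using that a by (intro low_monom) auto
  ultimately show ?thesis by (auto intro!: low_sum)
qed

lemma low_Xmul: "r \<in> low m \<Longrightarrow> X * r \<in> low (Suc m)"
proof -
  assume "r \<in> low m"
  then obtain a where a: "\<forall>d<m. a d \<in> A" and r: "r = (\<Sum>d<m. a d * X ^ d)" by (auto dest: low_elim)
  have "X * r = (\<Sum>d<m. X * a d * X ^ d)" by (simp add: r sum_distrib_left mult.assoc)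
  also have "\<dots> = (\<Sum>d<m. \<sigma> (a d) * X ^ Suc d + \<delta> (a d) * X ^ d)"
    by (rule sum.cong) (auto simp: comm a distrib_right mult.assoc)
  moreover have "\<sigma> (a d) * X ^ Suc d + \<delta> (a d) * X ^ d \<in> low (Suc m)" if "d < m" for d
    using that a by (intro low_add low_monom sA dA) auto
  ultimately show ?thesis by (auto intro!: low_sum)
qed

lemma low_Xpow_mul: "r \<in> low m \<Longrightarrow> X ^ e * r \<in> low (m + e)"
  by (induction e) (auto simp: mult.assoc dest: low_Xmul)

lemma sigma_pow_A: "b \<in> A \<Longrightarrow> (\<sigma> ^^ d) b \<in> A"
  by (induction d) (auto simp: sA)

lemma Xpow_A: "b \<in> A \<Longrightarrow> \<exists>L\<in>low d. X ^ d * b = (\<sigma> ^^ d) b * X ^ d + L"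
proof (induction d)
  case 0 then show ?case by (auto simp: low_zero)
next
  case (Suc d)
  then obtain L where L: "L \<in> low d" "X ^ d * b = (\<sigma> ^^ d) b * X ^ d + L" by auto
  have sb: "(\<sigma> ^^ d) b \<in> A" using Suc sigma_pow_A by blast
  have "X ^ Suc d * b = X * (X ^ d * b)" by (simp add: mult.assoc)
  also have "\<dots> = X * (\<sigma> ^^ d) b * X ^ d + X * L" by (simp add: L distrib_left mult.assoc)
  also have "\<dots> = (\<sigma> ^^ Suc d) b * X ^ Suc d + (\<delta> ((\<sigma> ^^ d) b) * X ^ d + X * L)"
    by (simp add: comm sb distrib_right mult.assoc)
  finally show ?case
    by (intro bexI[where x = "\<delta> ((\<sigma> ^^ d) b) * X ^ d + X * L"])
       (auto intro!: low_add low_monom dA sb low_Xmul L)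
qed

lemma low_mulA: "r \<in> low m \<Longrightarrow> b \<in> A \<Longrightarrow> r * b \<in> low m"
proof -
  assume "r \<in> low m" and b: "b \<in> A"
  then obtain a where a: "\<forall>d<m. a d \<in> A" and r: "r = (\<Sum>d<m. a d * X ^ d)" by (auto dest: low_elim)
  have "r * b = (\<Sum>d<m. a d * (X ^ d * b))" by (simp add: r sum_distrib_right mult.assoc)
  moreover have "a d * (X ^ d * b) \<in> low m" if "d < m" for d
  proof -
    obtain L where L: "L \<in> low d" "X ^ d * b = (\<sigma> ^^ d) b * X ^ d + L" using Xpow_A[OF b] by blast
    have "(\<sigma> ^^ d) b * X ^ d + L \<in> low m"
      using that L by (auto intro!: low_add low_monom sigma_pow_A b elim: low_mono)
    then show ?thesis using L a that by (auto intro!: low_lmul)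
  qed
  ultimately show ?thesis by (auto intro!: low_sum)
qed

lemma low_mul: "r \<in> low m \<Longrightarrow> s \<in> low n \<Longrightarrow> r * s \<in> low (m + n)"
proof -
  assume r: "r \<in> low m" and "s \<in> low n"
  then obtain b where b: "\<forall>d<n. b d \<in> A" and s: "s = (\<Sum>d<n. b d * X ^ d)" by (auto dest: low_elim)
  have "r * s = (\<Sum>d<n. (r * b d) * X ^ d)" by (simp add: s sum_distrib_left mult.assoc)
  moreover have "(r * b d) * X ^ d \<in> low (m + n)" if "d < n" for d
    using low_rmulX[OF low_mulA[OF r b[rule_format, OF that]], of d] that
    by (auto elim: low_mono)
  ultimately show ?thesis by (auto intro!: low_sum)
qed


lemma uniq2:
  assumes a: "\<forall>d<M. a d \<in> A" and b: "\<forall>d<M. b d \<in> A"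
    and eq: "(\<Sum>d<M. a d * X ^ d) = (\<Sum>d<M. b d * X ^ d)" and d: "d < M"
  shows "a d = b d"
proof -
  have M: "{..<M} = {..M - 1}" using d by auto
  have "(\<Sum>i<M. (a i - b i) * X ^ i) = 0"
    using eq by (simp add: left_diff_distrib sum_subtractf)
  then have "(\<Sum>i\<le>M - 1. (a i - b i) * X ^ i) = 0" by (simp only: M)
  moreover have "\<forall>i\<le>M - 1. a i - b i \<in> A" using a b M by (auto intro: subA)
  ultimately have "\<forall>i\<le>M - 1. a i - b i = 0" using indep[of "M - 1" "\<lambda>i. a i - b i"] by blast
  then show ?thesis using d by auto
qed

lemma low_split: "r \<in> low (Suc m) \<Longrightarrow> \<exists>a L. a \<in> A \<and> L \<in> low m \<and> r = a * X ^ m + L"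
proof -
  assume "r \<in> low (Suc m)"
  then obtain a where a: "\<forall>d<Suc m. a d \<in> A" and r: "r = (\<Sum>d<Suc m. a d * X ^ d)" by (auto dest: low_elim)
  have "(\<Sum>d<m. a d * X ^ d) \<in> low m" using a by (auto intro!: low_sum low_monom)
  then show ?thesis using a r by (intro exI[of _ "a m"] exI[of _ "\<Sum>d<m. a d * X ^ d"]) auto
qed

lemma uniq_top:
  assumes a: "a \<in> A" and L: "L \<in> low m" and in_low: "a * X ^ m + L \<in> low m"
  shows "a = 0"
proof -
  obtain l where l: "\<forall>d<m. l d \<in> A" and Ll: "L = (\<Sum>d<m. l d * X ^ d)" using L by (auto dest: low_elim)
  obtain l' where l': "\<forall>d<m. l' d \<in> A" and Ll': "a * X ^ m + L = (\<Sum>d<m. l' d * X ^ d)"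
    using in_low by (auto dest: low_elim)
  have s1: "(\<Sum>d<Suc m. (l(m := a)) d * X ^ d) = a * X ^ m + L"
    by (simp add: Ll add.commute)
  have s2: "(\<Sum>d<Suc m. (l'(m := 0)) d * X ^ d) = a * X ^ m + L"
    by (simp add: Ll')
  have "(l(m := a)) m = (l'(m := 0)) m"
    by (rule uniq2[of "Suc m"]) (use s1 s2 l l' a zA in \<open>auto simp: less_Suc_eq\<close>)
  then show ?thesis by simp
qed

lemma exact_deg: "r \<in> low M \<Longrightarrow> r = 0 \<or> (\<exists>m a L. a \<in> A \<and> a \<noteq> 0 \<and> L \<in> low m \<and> r = a * X ^ m + L)"
proof (induction M arbitrary: r)
  case 0 then show ?case by (simp add: low_0)
next
  case (Suc M)
  then obtain a L where aL: "a \<in> A" "L \<in> low M" "r = a * X ^ M + L" using low_split by blast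
  show ?case
  proof (cases "a = 0")
    case True then show ?thesis using Suc.IH[of L] aL by simp
  next
    case False then show ?thesis using aL by blast
  qed
qed

lemma sigma0: "\<sigma> 0 = 0"
  using sadd[OF zA zA] by simp

lemma sigma_pow_nz: "b \<in> A \<Longrightarrow> b \<noteq> 0 \<Longrightarrow> (\<sigma> ^^ d) b \<noteq> 0"
proof (induction d)
  case 0 then show ?case by simp
next
  case (Suc d)
  have "(\<sigma> ^^ d) b \<in> A" using Suc sigma_pow_A by blast
  then show ?case using Suc inj_onD[OF sinj, of "(\<sigma> ^^ d) b" 0] zA sigma0 by auto
qed

lemma lead:
  assumes a: "a \<in> A" and b: "b \<in> A" and L1: "L1 \<in> low m" and L2: "L2 \<in> low n"
  shows "\<exists>L\<in>low (m + n). (a * X ^ m + L1) * (b * X ^ n + L2) = a * (\<sigma> ^^ m) b * X ^ (m + n) + L"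
proof -
  obtain L where L: "L \<in> low m" "X ^ m * b = (\<sigma> ^^ m) b * X ^ m + L" using Xpow_A[OF b] by blast
  have "(a * X ^ m + L1) * (b * X ^ n + L2)
      = a * (X ^ m * b) * X ^ n + a * (X ^ m * L2) + L1 * b * X ^ n + L1 * L2"
    by (simp add: algebra_simps)
  also have "\<dots> = a * (\<sigma> ^^ m) b * X ^ (m + n) + (a * L * X ^ n + a * (X ^ m * L2) + L1 * b * X ^ n + L1 * L2)"
    by (simp add: L algebra_simps power_add)
  moreover have "a * L * X ^ n + a * (X ^ m * L2) + L1 * b * X ^ n + L1 * L2 \<in> low (m + n)"
  proof -
    have t1: "a * L * X ^ n \<in> low (m + n)" using low_rmulX[OF low_lmul[OF a L(1)]] .
    have t2: "a * (X ^ m * L2) \<in> low (m + n)" using low_lmul[OF a low_Xpow_mul[OF L2, of m]] by (simp add: add.commute)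
    have t3: "L1 * b * X ^ n \<in> low (m + n)" using low_rmulX[OF low_mulA[OF L1 b]] .
    have t4: "L1 * L2 \<in> low (m + n)" using low_mul[OF L1 L2] .
    show ?thesis using t1 t2 t3 t4 by (intro low_add)
  qed
  ultimately show ?thesis by (auto simp: add.assoc)
qed

definition span :: "'r set" where "span = (\<Union>M. low M)"

lemma dom_span:
  assumes domA: "\<forall>a\<in>A. \<forall>b\<in>A. a * b = 0 \<longrightarrow> a = 0 \<or> b = 0"
    and r: "r \<in> span" and s: "s \<in> span" and rs: "r * s = 0"
  shows "r = 0 \<or> s = 0"
proof (rule ccontr)
  assume nz: "\<not> (r = 0 \<or> s = 0)"
  obtain m a L1 where 1: "a \<in> A" "a \<noteq> 0" "L1 \<in> low m" "r = a * X ^ m + L1"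
    using r nz exact_deg unfolding span_def by blast
  obtain n b L2 where 2: "b \<in> A" "b \<noteq> 0" "L2 \<in> low n" "s = b * X ^ n + L2"
    using s nz exact_deg unfolding span_def by blast
  obtain L where L: "L \<in> low (m + n)" "r * s = a * (\<sigma> ^^ m) b * X ^ (m + n) + L"
    using lead[OF 1(1) 2(1) 1(3) 2(3)] 1 2 by auto
  have "a * (\<sigma> ^^ m) b = 0"
    by (rule uniq_top[OF _ L(1)]) (use L rs 1 2 sigma_pow_A low_zero mulA in auto)
  then show False using domA 1 2 sigma_pow_A sigma_pow_nz by blast
qed

end


lemma Kalg: fixes emb :: "'k::field \<Rightarrow> 'r::ring_1" assumes "K_algebra emb"
  shows "emb 1 = 1" "inj emb" "\<And>a b. emb (a + b) = emb a + emb b" "\<And>a b. emb (a * b) = emb a * emb b"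
    "\<And>c r. emb c * r = r * emb c"
  using assms unfolding K_algebra_def by blast+

lemma emb0: fixes emb :: "'k::field \<Rightarrow> 'r::ring_1" assumes "K_algebra emb" shows "emb 0 = 0"
  using Kalg(3)[OF assms, of 0 0] by simp

lemma ga_zero: fixes emb :: "'k::field \<Rightarrow> 'r::ring_1" assumes "K_algebra emb" shows "0 \<in> gen_alg emb S"
  using gen_alg.scal[of emb 0 S] emb0[OF assms] by simp

lemma ga_one: fixes emb :: "'k::field \<Rightarrow> 'r::ring_1" assumes "K_algebra emb" shows "1 \<in> gen_alg emb S"
  using gen_alg.scal[of emb 1 S] Kalg(1)[OF assms] by simp

lemma ga_mono: "a \<in> gen_alg emb S \<Longrightarrow> S \<subseteq> T \<Longrightarrow> a \<in> gen_alg emb T"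
  by (induction rule: gen_alg.induct) (auto intro: gen_alg.intros)

lemma Rk_mono: "k \<le> k' \<Longrightarrow> Rk emb x k \<subseteq> Rk emb x k'"
  unfolding Rk_def by (auto elim!: ga_mono)

lemma ga_pow: fixes emb :: "'k::field \<Rightarrow> 'r::ring_1" assumes "K_algebra emb"
  shows "a \<in> gen_alg emb S \<Longrightarrow> a ^ d \<in> gen_alg emb S"
  by (induction d) (auto intro: gen_alg.intros ga_one[OF assms])

lemma ga_sum: fixes emb :: "'k::field \<Rightarrow> 'r::ring_1" assumes "K_algebra emb"
  shows "finite I \<Longrightarrow> (\<And>d. d \<in> I \<Longrightarrow> f d \<in> gen_alg emb S) \<Longrightarrow> sum f I \<in> gen_alg emb S"
  by (induction I rule: finite_induct) (auto intro: gen_alg.intros ga_zero[OF assms])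

lemma x_in_Rk: "1 \<le> i \<Longrightarrow> i \<le> k \<Longrightarrow> x i \<in> Rk emb x k"
  unfolding Rk_def by (auto intro: gen_alg.base)

lemma ostep_of:
  fixes emb :: "'k::field \<Rightarrow> 'r::ring_1"
  assumes Q: "QNA emb x N \<sigma> \<delta> n act" and k: "k \<in> {1..N}"
  shows "ostep (Rk emb x (k - 1)) (x k) (\<sigma> k) (\<delta> k)"
proof -
  have K: "K_algebra emb" using Q unfolding QNA_def by blast
  have os: "ore_step emb x k (\<sigma> k) (\<delta> k)" using Q k unfolding QNA_def by blast
  define A where "A = Rk emb x (k - 1)"
  have os2: "\<sigma> k ` A = A \<and> inj_on (\<sigma> k) A \<and>
       (\<forall>a\<in>A. \<forall>b\<in>A. \<sigma> k (a + b) = \<sigma> k a + \<sigma> k b \<and> \<sigma> k (a * b) = \<sigma> k a * \<sigma> k b) \<and>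
       (\<forall>c. \<sigma> k (emb c) = emb c) \<and>
       (\<forall>a\<in>A. \<delta> k a \<in> A) \<and>
       (\<forall>a\<in>A. \<forall>b\<in>A. \<delta> k (a + b) = \<delta> k a + \<delta> k b \<and> \<delta> k (a * b) = \<sigma> k a * \<delta> k b + \<delta> k a * b) \<and>
       (\<forall>c. \<delta> k (emb c) = 0) \<and>
       (\<forall>a\<in>A. x k * a = \<sigma> k a * x k + \<delta> k a) \<and>
       (\<forall>(a :: nat \<Rightarrow> 'r) m. (\<forall>i\<le>m. a i \<in> A) \<and> (\<Sum>i\<le>m. a i * x k ^ i) = 0
            \<longrightarrow> (\<forall>i\<le>m. a i = 0))"
    using os unfolding ore_step_def Let_def A_def by simp
  have s1: "\<sigma> k ` A = A" and s2: "inj_on (\<sigma> k) A"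
    and s3: "\<forall>a\<in>A. \<forall>b\<in>A. \<sigma> k (a + b) = \<sigma> k a + \<sigma> k b"
    and s4: "\<forall>a\<in>A. \<delta> k a \<in> A" and s5: "\<forall>a\<in>A. x k * a = \<sigma> k a * x k + \<delta> k a"
    and s6: "\<forall>(a :: nat \<Rightarrow> 'r) m. (\<forall>i\<le>m. a i \<in> A) \<and> (\<Sum>i\<le>m. a i * x k ^ i) = 0
            \<longrightarrow> (\<forall>i\<le>m. a i = 0)"
    using os2 by auto
  show ?thesis
    unfolding A_def[symmetric]
  proof
    show "0 \<in> A" "1 \<in> A" unfolding A_def Rk_def using ga_zero[OF K] ga_one[OF K] by auto
    show "\<And>a b. a \<in> A \<Longrightarrow> b \<in> A \<Longrightarrow> a + b \<in> A" "\<And>a. a \<in> A \<Longrightarrow> - a \<in> A"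
      "\<And>a b. a \<in> A \<Longrightarrow> b \<in> A \<Longrightarrow> a * b \<in> A"
      unfolding A_def Rk_def by (auto intro: gen_alg.intros)
    show "\<And>a. a \<in> A \<Longrightarrow> \<sigma> k a \<in> A" using s1 by blast
    show "inj_on (\<sigma> k) A" by (rule s2)
    show "\<And>a b. a \<in> A \<Longrightarrow> b \<in> A \<Longrightarrow> \<sigma> k (a + b) = \<sigma> k a + \<sigma> k b" using s3 by blast
    show "\<And>a. a \<in> A \<Longrightarrow> \<delta> k a \<in> A" using s4 by blast
    show "\<And>a. a \<in> A \<Longrightarrow> x k * a = \<sigma> k a * x k + \<delta> k a" using s5 by blast
    show "\<And>c m. \<forall>i\<le>m. c i \<in> A \<Longrightarrow> (\<Sum>i\<le>m. c i * x k ^ i) = 0 \<Longrightarrow> \<forall>i\<le>m. c i = 0"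
      using s6 by blast
  qed
qed

lemma span_Rk:
  fixes emb :: "'k::field \<Rightarrow> 'r::ring_1"
  assumes Q: "QNA emb x N \<sigma> \<delta> n act" and k: "k \<in> {1..N}"
  shows "Rk emb x k = ostep.span (Rk emb x (k - 1)) (x k)"
proof -
  interpret ostep "Rk emb x (k - 1)" "x k" "\<sigma> k" "\<delta> k" using ostep_of[OF Q k] .
  have K: "K_algebra emb" using Q unfolding QNA_def by blast
  have S: "x ` {1..k} = insert (x k) (x ` {1..k-1})" proof -
    have "{1..k} = insert k {1..k-1}" using k by auto
    then show ?thesis by simp
  qed
  show ?thesis
  proof
    show "Rk emb x k \<subseteq> span"
    proof
      fix r assume "r \<in> Rk emb x k"
      then have "r \<in> gen_alg emb (x ` {1..k})" unfolding Rk_def .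
      then show "r \<in> span"
      proof (induction rule: gen_alg.induct)
        case (base a)
        show ?case
        proof (cases "a = x k")
          case True
          then have "a = 1 * x k ^ 1" by simp
          then have "a \<in> low 2" using low_monom[OF oA, of 1 2] by simp
          then show ?thesis unfolding span_def by blast
        next
          case False
          then have "a \<in> Rk emb x (k - 1)" using base S unfolding Rk_def by (auto intro: gen_alg.base)
          then show ?thesis using A_low[of a 0] unfolding span_def by blast
        qed
      next
        case (scal c)
        have "emb c \<in> Rk emb x (k - 1)" unfolding Rk_def by (rule gen_alg.scal)
        then show ?case using A_low[of _ 0] unfolding span_def by blast
      next
        case (add a b)
        then obtain m m' where "a \<in> low m" "b \<in> low m'" unfolding span_def by blast
        then have "a + b \<in> low (max m m')" using low_mono[of a m "max m m'"] low_mono[of b m' "max m m'"] by (intro low_add) auto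
        then show ?case unfolding span_def by blast
      next
        case (neg a)
        then show ?case unfolding span_def by (blast intro: low_neg)
      next
        case (mul a b)
        then obtain m m' where "a \<in> low m" "b \<in> low m'" unfolding span_def by blast
        then show ?case unfolding span_def by (blast intro: low_mul)
      qed
    qed
  next
    show "span \<subseteq> Rk emb x k"
    proof
      fix r assume "r \<in> span"
      then obtain M where "r \<in> low M" unfolding span_def by blast
      then obtain a where a: "\<forall>d<M. a d \<in> Rk emb x (k - 1)" and r: "r = (\<Sum>d<M. a d * x k ^ d)"
        using low_elim by blast
      have "a d \<in> Rk emb x k" if "d < M" for d using a that Rk_mono[where k="k - 1" and k'=k and emb=emb and x=x] by auto
      moreover have "x k \<in> Rk emb x k" using k by (auto intro: x_in_Rk)
      ultimately show "r \<in> Rk emb x k" unfolding r Rk_def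
        by (auto intro!: ga_sum[OF K] gen_alg.mul ga_pow[OF K])
    qed
  qed
qed

definition domain_set :: "'r::ring_1 set \<Rightarrow> bool" where
  "domain_set S \<longleftrightarrow> (\<forall>a\<in>S. \<forall>b\<in>S. a * b = 0 \<longrightarrow> a = 0 \<or> b = 0)"

lemma Rk0_dom:
  fixes emb :: "'k::field \<Rightarrow> 'r::ring_1"
  assumes K: "K_algebra emb" shows "domain_set (Rk emb x 0)"
proof -
  have "r \<in> range emb" if "r \<in> Rk emb x 0" for r
  proof -
    have "r \<in> gen_alg emb (x ` {1..0})" using that unfolding Rk_def .
    then show ?thesis
    proof (induction rule: gen_alg.induct)
      case (add a b)
      then obtain c d where "a = emb c" "b = emb d" by auto
      then have "a + b = emb (c + d)" using Kalg(3)[OF K] by simp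
      then show ?case by auto
    next
      case (neg a)
      then obtain c where "a = emb c" by auto
      have h: "emb c + emb (- c) = 0" using Kalg(3)[OF K, of c "- c"] emb0[OF K] by simp
      have "- emb c = emb (- c)" using h by (rule minus_unique)
      then have "- a = emb (- c)" using \<open>a = emb c\<close> by simp
      then show ?case by auto
    next
      case (mul a b)
      then obtain c d where "a = emb c" "b = emb d" by auto
      then have "a * b = emb (c * d)" using Kalg(4)[OF K] by simp
      then show ?case by auto
    qed auto
  qed
  moreover have "emb a * emb b = 0 \<Longrightarrow> emb a = 0 \<or> emb b = 0" for a b
  proof -
    assume "emb a * emb b = 0"
    then have "emb (a * b) = emb 0" using Kalg(4)[OF K] emb0[OF K] by simp
    then have "a * b = 0" using Kalg(2)[OF K] by (auto dest: injD)
    then show ?thesis using emb0[OF K] by auto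
  qed
  ultimately show ?thesis unfolding domain_set_def
  proof (intro ballI impI)
    fix a b assume R: "\<And>r. r \<in> Rk emb x 0 \<Longrightarrow> r \<in> range emb"
      and E: "\<And>a b. emb a * emb b = 0 \<Longrightarrow> emb a = 0 \<or> emb b = 0"
      and ab: "a \<in> Rk emb x 0" "b \<in> Rk emb x 0" "a * b = 0"
    obtain c d where "a = emb c" "b = emb d" using R ab by blast
    then show "a = 0 \<or> b = 0" using E ab by blast
  qed
qed

lemma Rk_dom:
  fixes emb :: "'k::field \<Rightarrow> 'r::ring_1"
  assumes Q: "QNA emb x N \<sigma> \<delta> n act" shows "k \<le> N \<Longrightarrow> domain_set (Rk emb x k)"
proof (induction k)
  case 0
  have "K_algebra emb" using Q unfolding QNA_def by blast
  then show ?case by (rule Rk0_dom)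
next
  case (Suc k)
  have k: "Suc k \<in> {1..N}" using Suc by auto
  interpret ostep "Rk emb x k" "x (Suc k)" "\<sigma> (Suc k)" "\<delta> (Suc k)" using ostep_of[OF Q k] by simp
  have dA: "domain_set (Rk emb x k)" using Suc by simp
  have sp: "Rk emb x (Suc k) = span" using span_Rk[OF Q k] by simp
  show ?case unfolding domain_set_def sp
  proof (intro ballI impI)
    fix a b assume "a \<in> span" "b \<in> span" "a * b = 0"
    then show "a = 0 \<or> b = 0" using dom_span[of a b] dA unfolding domain_set_def by blast
  qed
qed



context ostep begin

lemma low1_A: "r \<in> low (Suc 0) \<Longrightarrow> r \<in> A"
  by (auto dest!: low_elim)

lemma A_span: "a \<in> A \<Longrightarrow> a \<in> span"
  unfolding span_def using A_low[of a 0] by blast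

lemma deg_lemma:
  assumes u: "u \<in> A" "u \<noteq> 0" and v: "v \<in> A"
    and domA: "\<forall>a\<in>A. \<forall>b\<in>A. a * b = 0 \<longrightarrow> a = 0 \<or> b = 0"
    and t: "t \<in> span" and tl: "(u * X + v) * t \<in> low (Suc M)"
  shows "t \<in> low M"
proof (cases "t = 0")
  case True then show ?thesis by (simp add: low_zero)
next
  case False
  then obtain m a L where aL: "a \<in> A" "a \<noteq> 0" "L \<in> low m" "t = a * X ^ m + L"
    using t exact_deg unfolding span_def by blast
  show ?thesis
  proof (cases "m < M")
    case True
    then show ?thesis using aL low_mono[of L m M] by (auto intro!: low_add low_monom)
  next
    case False
    have v1: "v \<in> low 1" using A_low[OF v, of 0] by simp
    obtain L' where L': "L' \<in> low (1 + m)" "(u * X ^ 1 + v) * (a * X ^ m + L) = u * (\<sigma> ^^ 1) a * X ^ (1 + m) + L'"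
      using lead[OF u(1) aL(1) v1 aL(3)] by blast
    have "u * (\<sigma> ^^ 1) a * X ^ (1 + m) + L' \<in> low (1 + m)"
      using tl L' aL(4) False low_mono[of _ "Suc M" "1 + m"] by auto
    then have "u * (\<sigma> ^^ 1) a = 0" using uniq_top[OF _ L'(1)] mulA u sigma_pow_A aL by blast
    then show ?thesis using domA u aL sigma_pow_A sigma_pow_nz by blast
  qed
qed

lemma coeff1:
  assumes "p \<in> A" "q \<in> A" "r \<in> A" "s \<in> A" "p * X + q = r * X + s"
  shows "p = r"
proof -
  have e: "(\<Sum>d<Suc (Suc 0). (\<lambda>d. if d = 0 then q else p) d * X ^ d)
        = (\<Sum>d<Suc (Suc 0). (\<lambda>d. if d = 0 then s else r) d * X ^ d)"
    using assms(5) by (simp add: add.commute)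
  show ?thesis using uniq2[OF _ _ e, of 1] assms by auto
qed

lemma pr_step:
  assumes ya: "ya \<in> A" and yb: "yb \<in> A"
    and IH: "\<And>r s. r \<in> A \<Longrightarrow> s \<in> A \<Longrightarrow> ya * r = yb * s \<Longrightarrow> \<exists>t\<in>A. r = yb * t"
    and r: "r \<in> span" and s: "s \<in> span" and eq: "ya * r = yb * s"
  shows "\<exists>t\<in>span. r = yb * t"
proof -
  obtain M1 M2 where "r \<in> low M1" "s \<in> low M2" using r s unfolding span_def by blast
  then have "r \<in> low (max M1 M2)" "s \<in> low (max M1 M2)"
    using low_mono[of r M1 "max M1 M2"] low_mono[of s M2 "max M1 M2"] by auto
  then obtain a b where a: "\<forall>d<max M1 M2. a d \<in> A" and ra: "r = (\<Sum>d<max M1 M2. a d * X ^ d)"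
    and b: "\<forall>d<max M1 M2. b d \<in> A" and sb: "s = (\<Sum>d<max M1 M2. b d * X ^ d)"
    using low_elim by meson
  define M where "M = max M1 M2"
  have e: "(\<Sum>d<M. (ya * a d) * X ^ d) = (\<Sum>d<M. (yb * b d) * X ^ d)"
    using eq unfolding ra sb M_def by (simp add: sum_distrib_left mult.assoc)
  have "\<forall>d. \<exists>t. d < M \<longrightarrow> t \<in> A \<and> a d = yb * t"
  proof (intro allI)
    fix d show "\<exists>t. d < M \<longrightarrow> t \<in> A \<and> a d = yb * t"
    proof (cases "d < M")
      case True
      have "ya * a d = yb * b d" using uniq2[OF _ _ e True] a b ya yb mulA unfolding M_def by auto
      then show ?thesis using IH[of "a d" "b d"] a b True unfolding M_def by auto
    qed auto
  qed
  then obtain t where t: "\<And>d. d < M \<Longrightarrow> t d \<in> A \<and> a d = yb * t d" by metis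
  have "r = yb * (\<Sum>d<M. t d * X ^ d)"
    unfolding ra M_def[symmetric] by (simp add: sum_distrib_left mult.assoc t)
  moreover have "(\<Sum>d<M. t d * X ^ d) \<in> span" unfolding span_def low_def using t by blast
  ultimately show ?thesis by blast
qed

end



lemma QNA_K: "QNA emb x N \<sigma> \<delta> n act \<Longrightarrow> K_algebra emb"
  unfolding QNA_def by blast

lemma QNA_UNIV: "QNA emb x N \<sigma> \<delta> n act \<Longrightarrow> Rk emb x N = UNIV"
  unfolding QNA_def by blast

lemma QNA_torus: "QNA emb x N \<sigma> \<delta> n act \<Longrightarrow> torus_action emb x N n act"
  unfolding QNA_def by blast

lemma QNA_h: "QNA emb x N \<sigma> \<delta> n act \<Longrightarrow> k \<in> {1..N} \<Longrightarrow>
   \<exists>h\<in>torus n. (\<forall>a\<in>Rk emb x (k - 1). act h a = \<sigma> k a)"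
  unfolding QNA_def by blast

lemma act_props:
  assumes "torus_action emb x N n act" "h \<in> torus n"
  shows "inj (act h)" "\<And>a b. act h (a + b) = act h a + act h b" "\<And>a b. act h (a * b) = act h a * act h b"
  using assms unfolding torus_action_def by (blast dest: bij_is_inj)+

lemma act0:
  assumes "torus_action emb x N n act" "h \<in> torus n"
  shows "act h 0 = 0"
  using act_props(2)[OF assms, of 0 0] by simp

lemma GY_y:
  assumes G: "GY_elements emb x N n act \<mu> y" and k: "k \<in> {1..N}"
  shows "prime_elem_in (Rk emb x k) (y k)" "homogeneous emb n act (y k)"
proof -
  have "succ_gt \<mu> k k" unfolding succ_gt_def by auto
  then show "prime_elem_in (Rk emb x k) (y k)" "homogeneous emb n act (y k)"
    using G k unfolding GY_elements_def by auto
qed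

lemma GY_y_in: "GY_elements emb x N n act \<mu> y \<Longrightarrow> k \<in> {1..N} \<Longrightarrow> y k \<in> Rk emb x k"
  using GY_y(1) unfolding prime_elem_in_def normal_in_def by blast

lemma GY_y_nz: "GY_elements emb x N n act \<mu> y \<Longrightarrow> k \<in> {1..N} \<Longrightarrow> y k \<noteq> 0"
  using GY_y(1) unfolding prime_elem_in_def by blast

lemma pred_props:
  assumes "has_pred \<mu> k" shows "1 \<le> pred_idx \<mu> k" "pred_idx \<mu> k < k"
proof -
  obtain j where j: "1 \<le> j \<and> j < k \<and> \<mu> j = \<mu> k" using assms unfolding has_pred_def by blast
  have "1 \<le> pred_idx \<mu> k \<and> pred_idx \<mu> k < k \<and> \<mu> (pred_idx \<mu> k) = \<mu> k"
    unfolding pred_idx_def by (rule GreatestI_nat[of _ j k]) (use j in auto)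
  then show "1 \<le> pred_idx \<mu> k" "pred_idx \<mu> k < k" by auto
qed

lemma y_form:
  fixes emb :: "'k::field \<Rightarrow> 'r::ring_1"
  assumes Q: "QNA emb x N \<sigma> \<delta> n act" and G: "GY_elements emb x N n act \<mu> y" and k: "k \<in> {1..N}"
  shows "\<exists>u v. u \<in> Rk emb x (k - 1) \<and> v \<in> Rk emb x (k - 1) \<and> u \<noteq> 0 \<and> y k = u * x k + v \<and>
     ((\<not> has_pred \<mu> k \<and> u = 1) \<or> (has_pred \<mu> k \<and> u = y (pred_idx \<mu> k)))"
proof (cases "has_pred \<mu> k")
  case False
  then have "y k = x k" using G k unfolding GY_elements_def by blast
  moreover have "(0::'r) \<in> Rk emb x (k - 1)" "(1::'r) \<in> Rk emb x (k - 1)"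
    using ga_zero[OF QNA_K[OF Q]] ga_one[OF QNA_K[OF Q]] unfolding Rk_def by auto
  ultimately show ?thesis using False by (intro exI[of _ 1] exI[of _ 0]) auto
next
  case True
  then obtain c where c: "c \<in> Rk emb x (k - 1)" "y k = y (pred_idx \<mu> k) * x k - c"
    using G k unfolding GY_elements_def by blast
  have p: "pred_idx \<mu> k \<in> {1..N}" "pred_idx \<mu> k \<le> k - 1" using pred_props[OF True] k by auto
  have "y (pred_idx \<mu> k) \<in> Rk emb x (k - 1)"
    using GY_y_in[OF G p(1)] Rk_mono[OF p(2)] by blast
  moreover have "- c \<in> Rk emb x (k - 1)" using c unfolding Rk_def by (auto intro: gen_alg.neg)
  ultimately show ?thesis using True c GY_y_nz[OF G p(1)]
    by (intro exI[of _ "y (pred_idx \<mu> k)"] exI[of _ "- c"]) auto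
qed



lemma emb_mid: fixes emb :: "'k::field \<Rightarrow> 'r::ring_1" assumes K: "K_algebra emb"
  shows "a * (emb c * b) = emb c * (a * b)"
proof -
  have "a * (emb c * b) = (a * emb c) * b" by (simp add: mult.assoc)
  also have "\<dots> = (emb c * a) * b" using Kalg(5)[OF K, of c a] by simp
  finally show ?thesis by (simp add: mult.assoc)
qed

lemma emb_mult: fixes emb :: "'k::field \<Rightarrow> 'r::ring_1" assumes K: "K_algebra emb"
  shows "emb c * (emb d * r) = emb (c * d) * r"
  using Kalg(4)[OF K, of c d] by (simp add: mult.assoc)

lemma emb_inv: fixes emb :: "'k::field \<Rightarrow> 'r::ring_1" assumes K: "K_algebra emb" and c: "c \<noteq> 0"
  shows "emb (inverse c) * (emb c * r) = r"
  using emb_mult[OF K, of "inverse c" c r] c Kalg(1)[OF K] by simp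

lemma dom_univ: fixes emb :: "'k::field \<Rightarrow> 'r::ring_1"
  assumes Q: "QNA emb x N \<sigma> \<delta> n act" and "(a::'r) * b = 0" shows "a = 0 \<or> b = 0"
  using Rk_dom[OF Q, of N] QNA_UNIV[OF Q] assms(2) unfolding domain_set_def by auto

lemma PR:
  fixes emb :: "'k::field \<Rightarrow> 'r::ring_1"
  assumes Q: "QNA emb x N \<sigma> \<delta> n act" and G: "GY_elements emb x N n act \<mu> y"
    and a: "a \<in> {1..N}" and b: "b \<in> {1..N}" and ab: "a < b"
    and eq: "y a * r = y b * s"
  shows "\<exists>t. r = y b * t"
proof -
  have bN: "b \<le> N" using b by auto
  have main: "\<forall>r\<in>Rk emb x N. \<forall>s\<in>Rk emb x N. y a * r = y b * s \<longrightarrow> (\<exists>t\<in>Rk emb x N. r = y b * t)"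
    using bN
  proof (induction N rule: dec_induct)
    case base
    show ?case
    proof (intro ballI impI)
      fix r s assume r: "r \<in> Rk emb x b" and s: "s \<in> Rk emb x b" and e: "y a * r = y b * s"
      have P: "prime_elem_in (Rk emb x b) (y b)" using GY_y(1)[OF G b] .
      have yaR: "y a \<in> Rk emb x b" using GY_y_in[OF G a] Rk_mono[of a b] ab by auto
      have "y a * r \<in> {y b * c |c. c \<in> Rk emb x b}" using e s by auto
      then have "y a \<in> {y b * c |c. c \<in> Rk emb x b} \<or> r \<in> {y b * c |c. c \<in> Rk emb x b}"
        using P yaR r unfolding prime_elem_in_def Let_def by blast
      moreover have "y a \<notin> {y b * c |c. c \<in> Rk emb x b}"
      proof
        assume "y a \<in> {y b * c |c. c \<in> Rk emb x b}"
        then obtain t where t: "t \<in> Rk emb x b" "y a = y b * t" by auto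
        interpret ostep "Rk emb x (b - 1)" "x b" "\<sigma> b" "\<delta> b" using ostep_of[OF Q b] .
        obtain u v where uv: "u \<in> Rk emb x (b - 1)" "v \<in> Rk emb x (b - 1)" "u \<noteq> 0" "y b = u * x b + v"
          using y_form[OF Q G b] by blast
        have dA: "\<forall>a\<in>Rk emb x (b - 1). \<forall>c\<in>Rk emb x (b - 1). a * c = 0 \<longrightarrow> a = 0 \<or> c = 0"
        proof -
          have "b - 1 \<le> N" using b by auto
          then show ?thesis using Rk_dom[OF Q, of "b - 1"] unfolding domain_set_def by blast
        qed
        have tsp: "t \<in> span" using t span_Rk[OF Q b] by simp
        have "a \<le> b - 1" using ab by auto
        then have "y a \<in> Rk emb x (b - 1)" using GY_y_in[OF G a] Rk_mono[of a "b - 1"] by blast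
        then have "(u * x b + v) * t \<in> low (Suc 0)" using t uv A_low[of "y a" 0] by simp
        then have "t \<in> low 0" using deg_lemma[OF uv(1) uv(3) uv(2) dA tsp] by blast
        then have "y a = 0" using t low_0 by simp
        then show False using GY_y_nz[OF G a] by simp
      qed
      ultimately show "\<exists>t\<in>Rk emb x b. r = y b * t" by blast
    qed
  next
    case (step m)
    have k: "Suc m \<in> {1..N}" using step by auto
    interpret ostep "Rk emb x m" "x (Suc m)" "\<sigma> (Suc m)" "\<delta> (Suc m)" using ostep_of[OF Q k] by simp
    have sp: "Rk emb x (Suc m) = span" using span_Rk[OF Q k] by simp
    have ya: "y a \<in> Rk emb x m" using GY_y_in[OF G a] Rk_mono[of a m] ab step by auto
    have yb: "y b \<in> Rk emb x m" using GY_y_in[OF G b] Rk_mono[of b m] step by auto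
    show ?case unfolding sp
    proof (intro ballI impI)
      fix r s assume "r \<in> span" "s \<in> span" "y a * r = y b * s"
      then show "\<exists>t\<in>span. r = y b * t"
        using pr_step[OF ya yb] step.IH by blast
    qed
  qed
  show ?thesis using main eq QNA_UNIV[OF Q] by auto
qed



lemma QC:
  fixes emb :: "'k::field \<Rightarrow> 'r::ring_1"
  assumes Q: "QNA emb x N \<sigma> \<delta> n act" and G: "GY_elements emb x N n act \<mu> y"
  shows "i \<in> {1..N} \<Longrightarrow> 1 \<le> j \<Longrightarrow> j < i \<Longrightarrow> \<exists>l. l \<noteq> 0 \<and> y j * y i = emb l * (y i * y j)"
proof (induction i arbitrary: j rule: less_induct)
  case (less i)
  have K: "K_algebra emb" using QNA_K[OF Q] .
  have iN: "i \<in> {1..N}" and jN: "j \<in> {1..N}" using less by auto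
  interpret ostep "Rk emb x (i - 1)" "x i" "\<sigma> i" "\<delta> i" using ostep_of[OF Q iN] .
  obtain u v where uv: "u \<in> Rk emb x (i - 1)" "v \<in> Rk emb x (i - 1)" "u \<noteq> 0" "y i = u * x i + v"
    and ucase: "(\<not> has_pred \<mu> i \<and> u = 1) \<or> (has_pred \<mu> i \<and> u = y (pred_idx \<mu> i))"
    using y_form[OF Q G iN] by blast
  have "j \<le> i - 1" using less by auto
  then have yjA: "y j \<in> Rk emb x (i - 1)" using GY_y_in[OF G jN] Rk_mono[of j "i - 1"] by blast
  have yjRi: "y j \<in> Rk emb x i" using yjA Rk_mono[of "i - 1" i emb x] by auto
  have "normal_in (Rk emb x i) (y i)" using GY_y(1)[OF G iN] unfolding prime_elem_in_def by blast
  then have "y j * y i \<in> {y i * a |a. a \<in> Rk emb x i}" using yjRi unfolding normal_in_def by blast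
  then obtain b where b: "b \<in> Rk emb x i" "y j * y i = y i * b" by blast
  have domA: "\<forall>a\<in>Rk emb x (i - 1). \<forall>c\<in>Rk emb x (i - 1). a * c = 0 \<longrightarrow> a = 0 \<or> c = 0"
  proof -
    have "i - 1 \<le> N" using iN by auto
    then show ?thesis using Rk_dom[OF Q, of "i - 1"] unfolding domain_set_def by blast
  qed
  have bsp: "b \<in> span" using b span_Rk[OF Q iN] by simp
  have e1: "y j * y i = (y j * u) * x i ^ 1 + (y j * v) * x i ^ 0" using uv by (simp add: distrib_left mult.assoc)
  have "(y j * u) * x i ^ 1 + (y j * v) * x i ^ 0 \<in> low (Suc (Suc 0))"
    using yjA uv by (intro low_add low_monom mulA) auto
  then have "(u * x i + v) * b \<in> low (Suc (Suc 0))" using e1 b uv by simp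
  then have "b \<in> low (Suc 0)" using deg_lemma[OF uv(1) uv(3) uv(2) domA bsp] by blast
  then have bA: "b \<in> Rk emb x (i - 1)" by (rule low1_A)
  have "(u * x i + v) * b = u * (x i * b) + v * b" by (simp add: distrib_right mult.assoc)
  also have "\<dots> = (u * \<sigma> i b) * x i + (u * \<delta> i b + v * b)"
    using comm[OF bA] by (simp add: distrib_left mult.assoc add.assoc)
  finally have e3: "(u * x i + v) * b = (u * \<sigma> i b) * x i + (u * \<delta> i b + v * b)" .
  have "(y j * u) * x i + y j * v = y j * y i" using uv(4) by (simp add: distrib_left mult.assoc)
  also have "\<dots> = (u * x i + v) * b" using b(2) uv(4) by simp
  finally have "(y j * u) * x i + y j * v = (u * \<sigma> i b) * x i + (u * \<delta> i b + v * b)" using e3 by simp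
  moreover have "y j * u \<in> Rk emb x (i - 1)" "y j * v \<in> Rk emb x (i - 1)"
    "u * \<sigma> i b \<in> Rk emb x (i - 1)" "u * \<delta> i b + v * b \<in> Rk emb x (i - 1)"
    using mulA[OF yjA uv(1)] mulA[OF yjA uv(2)] mulA[OF uv(1) sA[OF bA]]
      addA[OF mulA[OF uv(1) dA[OF bA]] mulA[OF uv(2) bA]] by auto
  ultimately have c1: "y j * u = u * \<sigma> i b" using coeff1 by blast
  obtain h where h: "h \<in> torus n" "\<And>a. a \<in> Rk emb x (i - 1) \<Longrightarrow> act h a = \<sigma> i a"
    using QNA_h[OF Q iN] by blast
  have T: "torus_action emb x N n act" using QNA_torus[OF Q] .
  obtain \<chi>j where \<chi>j: "act h (y j) = emb (\<chi>j h) * y j"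
    using GY_y(2)[OF G jN] h(1) unfolding homogeneous_def by blast
  obtain \<chi>i where \<chi>i: "act h (y i) = emb (\<chi>i h) * y i"
    using GY_y(2)[OF G iN] h(1) unfolding homogeneous_def by blast
  define cj where "cj = \<chi>j h"
  define ci where "ci = \<chi>i h"
  have ci: "ci \<noteq> 0"
  proof
    assume "ci = 0"
    then have "act h (y i) = act h 0" using \<chi>i act0[OF T h(1)] emb0[OF K] unfolding ci_def by simp
    then have "y i = 0" using act_props(1)[OF T h(1)] by (auto dest: injD)
    then show False using GY_y_nz[OF G iN] by simp
  qed
  have "act h (y j * y i) = emb cj * y j * (emb ci * y i)"
    using act_props(3)[OF T h(1)] \<chi>j \<chi>i unfolding cj_def ci_def by simp
  also have "\<dots> = emb ci * (emb cj * (y j * y i))"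
    unfolding emb_mid[OF K, of "emb cj * y j" ci "y i"] by (simp add: mult.assoc)
  also have "\<dots> = emb ci * (y i * (emb cj * b))" using b(2) emb_mid[OF K, of "y i" cj b] by simp
  finally have l1: "act h (y j * y i) = emb ci * (y i * (emb cj * b))" .
  have "act h (y i * b) = emb ci * (y i * act h b)"
    using act_props(3)[OF T h(1)] \<chi>i unfolding ci_def by (simp add: mult.assoc)
  then have "emb ci * (y i * act h b) = emb ci * (y i * (emb cj * b))" using l1 b by simp
  then have "emb (inverse ci) * (emb ci * (y i * act h b)) = emb (inverse ci) * (emb ci * (y i * (emb cj * b)))"
    by simp
  then have "y i * act h b = y i * (emb cj * b)" unfolding emb_inv[OF K ci] .
  then have "y i * (act h b - emb cj * b) = 0" by (simp add: right_diff_distrib)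
  then have "act h b - emb cj * b = 0" using dom_univ[OF Q] GY_y_nz[OF G iN] by blast
  then have "act h b = emb cj * b" by simp
  then have sb: "\<sigma> i b = emb cj * b" using h(2)[OF bA] by simp
  have "\<exists>l'. l' \<noteq> 0 \<and> y j * u = emb l' * (u * y j)"
  proof (cases "has_pred \<mu> i")
    case False
    then have "u = 1" using ucase by blast
    then show ?thesis using Kalg(1)[OF K] by (intro exI[of _ 1]) simp
  next
    case True
    define p where "p = pred_idx \<mu> i"
    have u: "u = y p" using True ucase unfolding p_def by blast
    have p: "1 \<le> p" "p < i" using pred_props[OF True] unfolding p_def by auto
    have pN: "p \<in> {1..N}" using p iN by auto
    consider "j < p" | "j = p" | "p < j" by linarith
    then show ?thesis
    proof cases
      case 1 then show ?thesis using less.IH[OF p(2) pN less(3)] u by blast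
    next
      case 2 then show ?thesis using u Kalg(1)[OF K] by (intro exI[of _ 1]) simp
    next
      case 3
      then obtain l where l: "l \<noteq> 0" "y p * y j = emb l * (y j * y p)"
        using less.IH[OF less(4) jN p(1)] by blast
      have "y j * y p = emb (inverse l) * (y p * y j)" using l emb_inv[OF K l(1)] by simp
      then show ?thesis using u l by (intro exI[of _ "inverse l"]) simp
    qed
  qed
  then obtain l' where l': "l' \<noteq> 0" "y j * u = emb l' * (u * y j)" by blast
  have "u * (emb l' * y j) = emb l' * (u * y j)" by (rule emb_mid[OF K])
  also have "\<dots> = y j * u" using l'(2) by simp
  also have "\<dots> = u * (emb cj * b)" using c1 sb by simp
  finally have "u * (emb l' * y j) = u * (emb cj * b)" .
  then have "u * (emb l' * y j - emb cj * b) = 0" by (simp add: right_diff_distrib)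
  then have "emb l' * y j - emb cj * b = 0" using dom_univ[OF Q] uv(3) by blast
  then have e2: "emb l' * y j = emb cj * b" by simp
  have cj: "cj \<noteq> 0"
  proof
    assume "cj = 0"
    then have "emb l' * y j = 0" using e2 emb0[OF K] by simp
    then have "y j = 0" using emb_inv[OF K l'(1), of "y j"] by simp
    then show False using GY_y_nz[OF G jN] by simp
  qed
  have "b = emb (inverse cj) * (emb l' * y j)" using e2 emb_inv[OF K cj] by simp
  also have "\<dots> = emb (inverse cj * l') * y j" using emb_mult[OF K] by simp
  finally have bb: "b = emb (inverse cj * l') * y j" .
  have "y j * y i = emb (inverse cj * l') * (y i * y j)"
    using b(2) emb_mid[OF K, of "y i" "inverse cj * l'" "y j"] bb by simp
  moreover have "inverse cj * l' \<noteq> 0" using cj l' by simp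
  ultimately show ?case by blast
qed



theorem propositionA2:
  fixes emb :: "'k::field_char_0 \<Rightarrow> 'r::ring_1"
    and x :: "nat \<Rightarrow> 'r" and N n :: nat
    and \<sigma> \<delta> :: "nat \<Rightarrow> 'r \<Rightarrow> 'r"
    and act :: "(nat \<Rightarrow> 'k) \<Rightarrow> 'r \<Rightarrow> 'r"
    and \<mu> :: "nat \<Rightarrow> nat" and y :: "nat \<Rightarrow> 'r"
    and i j :: nat
  assumes "QNA emb x N \<sigma> \<delta> n act"
    and "GY_elements emb x N n act \<mu> y"
    and "i \<in> {1..N}" and "j \<in> {1..N}" and "i \<noteq> j"
  shows "{y i * r |r. True} \<inter> {y j * r |r. True} = {y i * y j * r |r. True}"
proof -
  note Q = assms(1) and G = assms(2) and iN = assms(3) and jN = assms(4)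
  have K: "K_algebra emb" using QNA_K[OF Q] .
  show ?thesis
  proof (cases "i < j")
    case True
    obtain l where l: "l \<noteq> 0" "y i * y j = emb l * (y j * y i)"
      using QC[OF Q G jN, of i] True iN by auto
    show ?thesis
    proof (intro equalityI subsetI)
      fix z assume "z \<in> {y i * r |r. True} \<inter> {y j * r |r. True}"
      then obtain r s where rs: "z = y i * r" "y i * r = y j * s" by auto
      obtain t where "r = y j * t" using PR[OF Q G iN jN True rs(2)] by blast
      then have "z = y i * y j * t" using rs(1) by (simp add: mult.assoc)
      then show "z \<in> {y i * y j * r |r. True}" by blast
    next
      fix z assume "z \<in> {y i * y j * r |r. True}"
      then obtain t where t: "z = y i * y j * t" by auto
      have "z = y i * (y j * t)" using t by (simp add: mult.assoc)
      moreover have "z = y j * (emb l * (y i * t))"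
        using t l(2) emb_mid[OF K, of "y j" l "y i * t"] by (simp add: mult.assoc)
      ultimately show "z \<in> {y i * r |r. True} \<inter> {y j * r |r. True}" by blast
    qed
  next
    case False
    then have ji: "j < i" using assms(5) by auto
    obtain l where l: "l \<noteq> 0" "y j * y i = emb l * (y i * y j)"
      using QC[OF Q G iN, of j] ji jN by auto
    show ?thesis
    proof (intro equalityI subsetI)
      fix z assume "z \<in> {y i * r |r. True} \<inter> {y j * r |r. True}"
      then obtain r s where rs0: "z = y i * r" "z = y j * s" by blast
      then have rs: "z = y j * s" "y j * s = y i * r" by auto
      obtain t where t: "s = y i * t" using PR[OF Q G jN iN ji rs(2)] by blast
      have "z = y j * y i * t" using rs t by (simp add: mult.assoc)
      also have "\<dots> = emb l * (y i * y j) * t" using l(2) by simp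
      also have "\<dots> = y i * y j * (emb l * t)"
        using emb_mid[OF K, of "y i * y j" l t] by (simp add: mult.assoc)
      finally show "z \<in> {y i * y j * r |r. True}" by auto
    next
      fix z assume "z \<in> {y i * y j * r |r. True}"
      then obtain t where t: "z = y i * y j * t" by auto
      have "z = y i * (y j * t)" using t by (simp add: mult.assoc)
      moreover have "y i * y j = emb (inverse l) * (y j * y i)"
        using l emb_inv[OF K l(1)] by simp
      then have "z = y j * (emb (inverse l) * (y i * t))"
        using t emb_mid[OF K, of "y j" "inverse l" "y i * t"] by (simp add: mult.assoc)
      ultimately show "z \<in> {y i * r |r. True} \<inter> {y j * r |r. True}" by blast
    qed
  qed
qed

end
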